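(* The functions $\operatorname{IsCode}(n)$, $\operatorname{Len}(n)$, $\operatorname{SymbolAt}(n,i)$, $\operatorname{Concat}(n,m)$, and $\operatorname{Sub}_Z(n,m)$ are primitive recursive.
   Context: Fibonacci numbers: $F_1=1$, $F_2=2$, $F_n=F_{n-1}+F_{n-2}$. Each $n$ has a unique Zeckendorf representation $n=\sum_{e\in S}F_e$ with no two consecutive indices; $Z(n)=S$, listed $e_1>e_2>\cdots$. Cantor pairing $\mathrm{pair}(x,y)=\frac{(x+y)(x+y+1)}{2}+x$ with inverse $\mathrm{unpair}$. $\operatorname{Seq}_Z([a_1,\dots,a_m])=\sum_{i=1}^m F_{2\,\mathrm{pair}(a_i,i)+1}$, empty sequence $\mapsto 0$. $\operatorname{IsCode}(n)$ holds iff $Z(n)$ consists of odd indices with gaps of at least 2. $\operatorname{Len}(n)=|Z(n)|$ if $\operatorname{IsCode}(n)$, else $0$. $\operatorname{SymbolAt}(n,i)=a$ if $\operatorname{IsCode}(n)$, $1\le i\le\operatorname{Len}(n)$ and the $i$-th index $e_i$ (in decreasing order) satisfies $\mathrm{unpair}((e_i-1)/2)=(a,i)$; otherwise $0$. For valid codes $n,m$ decoding to sequences $[a_1,\dots,a_k]$ and $[b_1,\dots,b_l]$, $\operatorname{Concat}(n,m)=\operatorname{Seq}_Z([a_1,\dots,a_k,b_1,\dots,b_l])$. Formulas and terms of a fixed first-order language are coded by $\operatorname{Seq}_Z$ of their sequences of symbol numbers; for $n$ coding a formula $\varphi(x)$ with free variable $x$ and $m$ coding a term $t$, $\operatorname{Sub}_Z(n,m)$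 is obtained by decoding $n$ to its symbol sequence, replacing each occurrence of $\ulcorner x\urcorner$ by the decoded symbol sequence of $m$, and re-encoding via $\operatorname{Seq}_Z$. *)

theory Defs
  imports Main "HOL-Library.Nat_Bijection"
begin

primrec hd0 :: "nat list \<Rightarrow> nat" where
  "hd0 [] = 0"
| "hd0 (m # ms) = m"

definition SC :: "nat list \<Rightarrow> nat" where
  "SC l = Suc (hd0 l)"

definition CONSTANT :: "nat \<Rightarrow> nat list \<Rightarrow> nat" where
  "CONSTANT k l = k"

definition PROJ :: "nat \<Rightarrow> nat list \<Rightarrow> nat" where
  "PROJ i l = hd0 (drop i l)"

definition COMP :: "(nat list \<Rightarrow> nat) \<Rightarrow> (nat list \<Rightarrow> nat) list \<Rightarrow> nat list \<Rightarrow> nat" where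
  "COMP g fs l = g (map (\<lambda>f. f l) fs)"

definition PREC :: "(nat list \<Rightarrow> nat) \<Rightarrow> (nat list \<Rightarrow> nat) \<Rightarrow> nat list \<Rightarrow> nat" where
  "PREC f g l =
    (case l of
      [] \<Rightarrow> 0
    | x # l' \<Rightarrow> rec_nat (f l') (\<lambda>y r. g (r # y # l')) x)"

inductive PRIMREC :: "(nat list \<Rightarrow> nat) \<Rightarrow> bool" where
  SC: "PRIMREC SC"
| CONSTANT: "PRIMREC (CONSTANT k)"
| PROJ: "PRIMREC (PROJ i)"
| COMP: "PRIMREC g \<Longrightarrow> \<forall>f \<in> set fs. PRIMREC f \<Longrightarrow> PRIMREC (COMP g fs)"
| PREC: "PRIMREC f \<Longrightarrow> PRIMREC g \<Longrightarrow> PRIMREC (PREC f g)"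

definition prim_rec1 :: "(nat \<Rightarrow> nat) \<Rightarrow> bool" where
  "prim_rec1 f \<longleftrightarrow> PRIMREC (\<lambda>l. f (hd0 l))"

definition prim_rec2 :: "(nat \<Rightarrow> nat \<Rightarrow> nat) \<Rightarrow> bool" where
  "prim_rec2 f \<longleftrightarrow> PRIMREC (\<lambda>l. f (hd0 l) (hd0 (drop 1 l)))"

fun fibZ :: "nat \<Rightarrow> nat" where
  "fibZ 0 = 1"   \<comment> \<open>auxiliary value, only indices \<ge> 1 are used\<close>
| "fibZ (Suc 0) = 1"
| "fibZ (Suc (Suc n)) = fibZ (Suc n) + fibZ n"

definition zeck_ok :: "nat set \<Rightarrow> bool" where
  "zeck_ok S \<longleftrightarrow> finite S \<and> 0 \<notin> S \<and> (\<forall>i \<in> S. Suc i \<notin> S)"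

definition Z :: "nat \<Rightarrow> nat set" where
  "Z n = (THE S. zeck_ok S \<and> (\<Sum>e\<in>S. fibZ e) = n)"

definition zlist :: "nat \<Rightarrow> nat list" where
  "zlist n = rev (sorted_list_of_set (Z n))"

definition pair :: "nat \<Rightarrow> nat \<Rightarrow> nat" where
  "pair x y = prod_encode (x, y)"

definition unpair :: "nat \<Rightarrow> nat \<times> nat" where
  "unpair n = prod_decode n"

definition SeqZ :: "nat list \<Rightarrow> nat" where
  "SeqZ as = (\<Sum>i = 1..length as. fibZ (2 * pair (as ! (i - 1)) i + 1))"

definition IsCode :: "nat \<Rightarrow> bool" where
  "IsCode n \<longleftrightarrow> (\<forall>e \<in> Z n. odd e) \<and> (\<forall>e \<in> Z n. \<forall>e' \<in> Z n. e < e' \<longrightarrow> e + 2 \<le> e')"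

definition Len :: "nat \<Rightarrow> nat" where
  "Len n = (if IsCode n then card (Z n) else 0)"

definition SymbolAt :: "nat \<Rightarrow> nat \<Rightarrow> nat" where
  "SymbolAt n i =
    (if IsCode n \<and> 1 \<le> i \<and> i \<le> Len n
        \<and> snd (unpair ((zlist n ! (i - 1) - 1) div 2)) = i
     then fst (unpair ((zlist n ! (i - 1) - 1) div 2)) else 0)"

definition decodeZ :: "nat \<Rightarrow> nat list" where
  "decodeZ n = map (SymbolAt n) [1..<Len n + 1]"

definition Concat :: "nat \<Rightarrow> nat \<Rightarrow> nat" where
  "Concat n m = SeqZ (decodeZ n @ decodeZ m)"

text \<open>Substitution; v is the symbol number of the variable x.\<close>
definition SubZ :: "nat \<Rightarrow> nat \<Rightarrow> nat \<Rightarrow> nat" where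
  "SubZ v n m = SeqZ (concat (map (\<lambda>s. if s = v then decodeZ m else [s]) (decodeZ n)))"

end

theory Submission
  imports Defs
begin


definition env :: "nat list \<Rightarrow> nat \<Rightarrow> nat" where
  "env l i = hd0 (drop i l)"

definition trunc :: "nat \<Rightarrow> (nat \<Rightarrow> nat) \<Rightarrow> nat \<Rightarrow> nat" where
  "trunc k e i = (if i < k then e i else 0)"

definition supp :: "nat \<Rightarrow> ((nat \<Rightarrow> nat) \<Rightarrow> nat) \<Rightarrow> bool" where
  "supp k F \<longleftrightarrow> (\<forall>e. F e = F (trunc k e))"

definition prk :: "((nat \<Rightarrow> nat) \<Rightarrow> nat) \<Rightarrow> bool" where
  "prk F \<longleftrightarrow> PRIMREC (\<lambda>l. F (env l)) \<and> (\<exists>k. supp k F)"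

lemma env_Nil[simp]: "env [] = (\<lambda>i. 0)"
  by (auto simp: env_def fun_eq_iff)

lemma env_Cons: "env (x # l) = case_nat x (env l)"
  by (auto simp: env_def fun_eq_iff split: nat.split)

lemma env_Cons0[simp]: "env (x # l) 0 = x" by (simp add: env_def)
lemma env_ConsS[simp]: "env (x # l) (Suc i) = env l i" by (simp add: env_def)
lemma env_Cons1[simp]: "env (x # l) 1 = env l 0" by (simp add: env_def)

lemma hd0_eq: "hd0 xs = (if xs = [] then 0 else hd xs)"
  by (cases xs) auto

lemma env_map_upt: "env (map e [0..<k]) = trunc k e"
  by (auto simp: fun_eq_iff env_def trunc_def hd0_eq drop_map hd_map)

lemma trunc_trunc: "k \<le> k' \<Longrightarrow> trunc k (trunc k' e) = trunc k e"
  by (auto simp: trunc_def fun_eq_iff)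

lemma supp_mono: "supp k F \<Longrightarrow> k \<le> k' \<Longrightarrow> supp k' F"
  unfolding supp_def by (metis trunc_trunc)

lemma supp_list: "\<forall>F\<in>set Fs. \<exists>k. supp k F \<Longrightarrow> \<exists>k. \<forall>F\<in>set Fs. supp k F"
proof (induction Fs)
  case Nil then show ?case by simp
next
  case (Cons F Fs)
  then obtain k k' where "supp k F" "\<forall>F\<in>set Fs. supp k' F" by auto
  then show ?case by (intro exI[of _ "max k k'"]) (auto intro: supp_mono)
qed

lemma prk_var: "prk (\<lambda>e. e i)"
  unfolding prk_def
proof
  have "(\<lambda>l. env l i) = PROJ i" by (simp add: fun_eq_iff env_def PROJ_def)
  then show "PRIMREC (\<lambda>l. env l i)" using PRIMREC.PROJ by simp
  show "\<exists>k. supp k (\<lambda>e. e i)" by (rule exI[of _ "Suc i"]) (simp add: supp_def trunc_def)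
qed

lemma prk_const: "prk (\<lambda>e. c)"
  unfolding prk_def
proof
  have "(\<lambda>l. c) = CONSTANT c" by (simp add: fun_eq_iff CONSTANT_def)
  then show "PRIMREC (\<lambda>l. c)" using PRIMREC.CONSTANT by simp
  show "\<exists>k. supp k (\<lambda>e. c)" by (simp add: supp_def)
qed

lemma prk_Suc0: "prk (\<lambda>e. Suc (e 0))"
  unfolding prk_def
proof
  have "(\<lambda>l. Suc (env l 0)) = SC" by (simp add: fun_eq_iff SC_def env_def)
  then show "PRIMREC (\<lambda>l. Suc (env l 0))" using PRIMREC.SC by simp
  show "\<exists>k. supp k (\<lambda>e. Suc (e 0))" by (rule exI[of _ 1]) (simp add: supp_def trunc_def)
qed

lemma prk_comp:
  assumes H: "prk H" and Fs: "\<forall>F\<in>set Fs. prk F"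
  shows "prk (\<lambda>e. H (env (map (\<lambda>F. F e) Fs)))"
  unfolding prk_def
proof
  have "(\<lambda>l. H (env (map (\<lambda>F. F (env l)) Fs))) = COMP (\<lambda>l. H (env l)) (map (\<lambda>F l. F (env l)) Fs)"
    by (simp add: fun_eq_iff COMP_def comp_def)
  moreover have "PRIMREC (COMP (\<lambda>l. H (env l)) (map (\<lambda>F l. F (env l)) Fs))"
    using H Fs by (auto simp: prk_def intro!: PRIMREC.COMP)
  ultimately show "PRIMREC (\<lambda>l. H (env (map (\<lambda>F. F (env l)) Fs)))" by simp
  from Fs have "\<forall>F\<in>set Fs. \<exists>k. supp k F" by (auto simp: prk_def)
  from supp_list[OF this] obtain k where k: "\<forall>F\<in>set Fs. supp k F" by blast
  have "\<And>e. map (\<lambda>F. F e) Fs = map (\<lambda>F. F (trunc k e)) Fs"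
    using k by (auto simp: supp_def)
  then show "\<exists>k. supp k (\<lambda>e. H (env (map (\<lambda>F. F e) Fs)))"
    unfolding supp_def by (intro exI[of _ k]) metis
qed

definition addL :: "nat list \<Rightarrow> nat" where "addL l = hd0 l + hd0 (drop 1 l)"

lemma PRIMREC_addL: "PRIMREC addL"
proof -
  have "addL = PREC (PROJ 0) (COMP SC [PROJ 0])"
  proof
    fix l show "addL l = PREC (PROJ 0) (COMP SC [PROJ 0]) l"
    proof (cases l)
      case Nil then show ?thesis by (simp add: addL_def PREC_def)
    next
      case (Cons x l')
      have "rec_nat (hd0 l') (\<lambda>y r. Suc r) x = x + hd0 l'" by (induction x) auto
      then show ?thesis using Cons
        by (simp add: addL_def PREC_def PROJ_def COMP_def SC_def)
    qed
  qed
  moreover have "PRIMREC (PREC (PROJ 0) (COMP SC [PROJ 0]))" by (auto intro!: PRIMREC.intros)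
  ultimately show ?thesis by simp
qed

lemma rec_nat_const: "rec_nat c (\<lambda>y r. d) a = (if a = 0 then c else d)"
  by (cases a) auto

lemma PRIMREC_nilc: "PRIMREC (\<lambda>l. if l = [] then c else 0)"
proof -
  have "(\<lambda>l. if l = [] then c else 0) = COMP (PREC (CONSTANT c) (CONSTANT 0)) [PREC (CONSTANT 1) (CONSTANT 1)]"
  proof
    fix l show "(if l = [] then c else 0) = COMP (PREC (CONSTANT c) (CONSTANT 0)) [PREC (CONSTANT 1) (CONSTANT 1)] l"
      by (cases l) (auto simp: COMP_def PREC_def CONSTANT_def rec_nat_const)
  qed
  moreover have "PRIMREC (COMP (PREC (CONSTANT c) (CONSTANT 0)) [PREC (CONSTANT 1) (CONSTANT 1)])"
    by (auto intro!: PRIMREC.intros)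
  ultimately show ?thesis by simp
qed

definition shift :: "(nat \<Rightarrow> nat) \<Rightarrow> nat \<Rightarrow> nat" where "shift e i = e (Suc i)"

lemma shift_zero[simp]: "shift (\<lambda>i. 0) = (\<lambda>i. 0)" by (simp add: shift_def fun_eq_iff)

lemma shift_case_nat[simp]: "shift (case_nat x e) = e" by (simp add: shift_def fun_eq_iff)

lemma shift_env_Cons[simp]: "shift (env (x # l)) = env l"
  by (simp add: shift_def fun_eq_iff)

lemma rec_base:
  assumes B: "PRIMREC (\<lambda>l. B (env l))" and G: "PRIMREC (\<lambda>l. G (env l))"
  shows "PRIMREC (\<lambda>l. rec_nat (B (shift (env l))) (\<lambda>y r. G (case_nat r (case_nat y (shift (env l))))) (env l 0))"
proof -
  let ?R = "PREC (\<lambda>l. B (env l)) (\<lambda>l. G (env l))"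
  have "(\<lambda>l. rec_nat (B (shift (env l))) (\<lambda>y r. G (case_nat r (case_nat y (shift (env l))))) (env l 0))
      = COMP addL [?R, \<lambda>l. if l = [] then B (\<lambda>i. 0) else 0]"
  proof
    fix l show "rec_nat (B (shift (env l))) (\<lambda>y r. G (case_nat r (case_nat y (shift (env l))))) (env l 0)
      = COMP addL [?R, \<lambda>l. if l = [] then B (\<lambda>i. 0) else 0] l"
    proof (cases l)
      case Nil then show ?thesis by (simp add: COMP_def addL_def PREC_def shift_def)
    next
      case (Cons x l') then show ?thesis
        by (simp add: COMP_def addL_def PREC_def env_Cons)
    qed
  qed
  moreover have "PRIMREC (COMP addL [?R, \<lambda>l. if l = [] then B (\<lambda>i. 0) else 0])"
    using B G by (auto intro!: PRIMREC.intros PRIMREC_addL PRIMREC_nilc)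
  ultimately show ?thesis by simp
qed

lemma trunc_case2: "2 \<le> k \<Longrightarrow> trunc k (case_nat r (case_nat y (trunc k X))) = trunc k (case_nat r (case_nat y X))"
  by (auto simp: trunc_def fun_eq_iff split: nat.split)

lemma shift_trunc: "shift (trunc (Suc k) e) = trunc k (shift e)"
  by (auto simp: trunc_def fun_eq_iff shift_def)

lemma trunc_Suc0[simp]: "trunc (Suc k) e 0 = e 0" by (simp add: trunc_def)

lemma env_Cons_map_upt: "env (a # map e [0..<k]) = case_nat a (trunc k e)"
  by (simp add: env_Cons env_map_upt)

lemma prk_rec:
  assumes N: "prk N" and B: "prk B" and G: "prk (\<lambda>e. G (e 0) (e 1) (\<lambda>i. e (Suc (Suc i))))"
  shows "prk (\<lambda>e. rec_nat (B e) (\<lambda>y r. G r y e) (N e))"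
proof -
  define G' where "G' = (\<lambda>e. G (e 0) (e 1) (\<lambda>i. e (Suc (Suc i))))"
  have G'e: "G' (case_nat r (case_nat y e)) = G r y e" for r y e by (simp add: G'_def)
  from N B G have "\<forall>F\<in>set [N, B, G']. \<exists>k. supp k F" by (auto simp: prk_def G'_def)
  from supp_list[OF this] obtain k0 where "\<forall>F\<in>set [N, B, G']. supp k0 F" by blast
  then have sk: "supp (max k0 2) N" "supp (max k0 2) B" "supp (max k0 2) G'"
    by (auto intro: supp_mono)
  define k where "k = max k0 2"
  have k2: "2 \<le> k" by (simp add: k_def)
  note sk = sk[folded k_def]
  have G'tr: "G' (case_nat r (case_nat y (trunc k X))) = G' (case_nat r (case_nat y X))" for r y X
    using sk(3) trunc_case2[OF k2] unfolding supp_def by metis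
  have Gtr: "G r y (trunc k X) = G r y X" for r y X using G'tr[of r y X] by (simp add: G'e)
  have Btr: "B (trunc k X) = B X" for X using sk(2) by (simp add: supp_def)
  define R where "R = (\<lambda>e'. rec_nat (B (shift e')) (\<lambda>y r. G' (case_nat r (case_nat y (shift e')))) (e' 0))"
  have PR: "PRIMREC (\<lambda>l. R (env l))"
    unfolding R_def by (rule rec_base) (use B G in \<open>auto simp: prk_def G'_def\<close>)
  have "supp (Suc k) R"
    unfolding supp_def R_def shift_trunc by (simp add: Btr G'tr)
  with PR have pR: "prk R" by (auto simp: prk_def)
  have "\<forall>F\<in>set (N # map (\<lambda>i e. e i) [0..<k]). prk F" using N by (auto intro: prk_var)
  from prk_comp[OF pR this]
  have "prk (\<lambda>e. R (env (N e # map e [0..<k])))" by (simp add: comp_def)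
  moreover have "R (env (N e # map e [0..<k])) = rec_nat (B e) (\<lambda>y r. G r y e) (N e)" for e
    unfolding env_Cons_map_upt R_def by (simp add: Btr Gtr G'e)
  ultimately show ?thesis by simp
qed

lemma prk_shift: assumes "prk F" shows "prk (\<lambda>e. F (\<lambda>i. e (Suc i)))"
proof -
  from assms obtain k where k: "supp k F" by (auto simp: prk_def)
  have "\<forall>F\<in>set (map (\<lambda>i e. e (Suc i)) [0..<k]). prk F" by (auto intro: prk_var)
  from prk_comp[OF assms this] have "prk (\<lambda>e. F (env (map (\<lambda>i. e (Suc i)) [0..<k])))"
    by (simp add: comp_def)
  moreover have "F (env (map (\<lambda>i. e (Suc i)) [0..<k])) = F (\<lambda>i. e (Suc i))" for e
    using k by (simp add: env_map_upt supp_def)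
  ultimately show ?thesis by simp
qed

lemma prk_comp1: "prk (\<lambda>e. f (e 0)) \<Longrightarrow> prk A \<Longrightarrow> prk (\<lambda>e. f (A e))"
  using prk_comp[of "\<lambda>e. f (e 0)" "[A]"] by simp

lemma prk_comp2: "prk (\<lambda>e. f (e 0) (e 1)) \<Longrightarrow> prk A \<Longrightarrow> prk B \<Longrightarrow> prk (\<lambda>e. f (A e) (B e))"
  using prk_comp[of "\<lambda>e. f (e 0) (e 1)" "[A, B]"] by simp

lemma prk_comp3: "prk (\<lambda>e. f (e 0) (e 1) (e 2)) \<Longrightarrow> prk A \<Longrightarrow> prk B \<Longrightarrow> prk C \<Longrightarrow> prk (\<lambda>e. f (A e) (B e) (C e))"
  using prk_comp[of "\<lambda>e. f (e 0) (e 1) (e 2)" "[A, B, C]"] by (simp add: numeral_2_eq_2)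



definition prkP :: "((nat \<Rightarrow> nat) \<Rightarrow> bool) \<Rightarrow> bool" where
  "prkP P \<longleftrightarrow> prk (\<lambda>e. if P e then 1 else 0)"

lemma prk_eqI: "prk F \<Longrightarrow> (\<And>e. F e = G e) \<Longrightarrow> prk G"
proof -
  assume "prk F" "\<And>e. F e = G e"
  then have "F = G" by auto
  with \<open>prk F\<close> show ?thesis by simp
qed

lemma prk_add0: "prk (\<lambda>e. e 0 + e 1)"
proof -
  have "prk (\<lambda>e. rec_nat (e 1) (\<lambda>y r. Suc r) (e 0))"
    by (rule prk_rec[where G="\<lambda>r y e. Suc r"]) (auto intro: prk_var prk_Suc0)
  moreover have "rec_nat b (\<lambda>y r. Suc r) n = n + b" for b n :: nat by (induction n) auto
  ultimately show ?thesis by simp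
qed

lemma prk_add: "prk A \<Longrightarrow> prk B \<Longrightarrow> prk (\<lambda>e. A e + B e)"
  by (rule prk_comp2[OF prk_add0])

lemma prk_Suc: "prk A \<Longrightarrow> prk (\<lambda>e. Suc (A e))"
  by (rule prk_comp1[OF prk_Suc0])

lemma prk_pred0: "prk (\<lambda>e. e 0 - 1)"
proof -
  have "prk (\<lambda>e. rec_nat 0 (\<lambda>y r. y) (e 0))"
    by (rule prk_rec[where G="\<lambda>r y e. y"]) (auto intro: prk_var prk_const)
  moreover have "rec_nat 0 (\<lambda>y r. y) n = n - 1" for n :: nat by (cases n) auto
  ultimately show ?thesis by simp
qed

lemma prk_sub0: "prk (\<lambda>e. e 0 - e 1)"
proof -
  have "prk (\<lambda>e. rec_nat (e 0) (\<lambda>y r. r - 1) (e 1))"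
    by (rule prk_rec[where G="\<lambda>r y e. r - 1"]) (rule prk_var prk_pred0)+
  moreover have "rec_nat b (\<lambda>y r. r - 1) n = b - n" for b n :: nat by (induction n) auto
  ultimately show ?thesis by simp
qed

lemma prk_sub: "prk A \<Longrightarrow> prk B \<Longrightarrow> prk (\<lambda>e. A e - B e)"
  by (rule prk_comp2[OF prk_sub0])

lemma prk_mult0: "prk (\<lambda>e. e 0 * e 1)"
proof -
  have "prk (\<lambda>e. rec_nat 0 (\<lambda>y r. r + e 1) (e 0))"
    by (rule prk_rec[where G="\<lambda>r y e. r + e 1"]) (intro prk_add prk_var prk_const)+
  moreover have "rec_nat 0 (\<lambda>y r. r + b) n = n * b" for b n :: nat by (induction n) auto
  ultimately show ?thesis by simp
qed

lemma prk_mult: "prk A \<Longrightarrow> prk B \<Longrightarrow> prk (\<lambda>e. A e * B e)"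
  by (rule prk_comp2[OF prk_mult0])

lemma prk_pow0: "prk (\<lambda>e. e 0 ^ e 1)"
proof -
  have "prk (\<lambda>e. rec_nat 1 (\<lambda>y r. r * e 0) (e 1))"
    by (rule prk_rec[where G="\<lambda>r y e. r * e 0"]) (intro prk_mult prk_var prk_const)+
  moreover have "rec_nat 1 (\<lambda>y r. r * b) n = b ^ n" for b n :: nat by (induction n) auto
  ultimately show ?thesis by simp
qed

lemma prk_pow: "prk A \<Longrightarrow> prk B \<Longrightarrow> prk (\<lambda>e. A e ^ B e)"
  by (rule prk_comp2[OF prk_pow0])

lemma prk_if: "prkP P \<Longrightarrow> prk A \<Longrightarrow> prk B \<Longrightarrow> prk (\<lambda>e. if P e then A e else B e)"
  unfolding prkP_def
  apply (rule prk_eqI[where F="\<lambda>e. (if P e then 1 else 0) * A e + (1 - (if P e then 1 else 0)) * B e"])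
  apply (intro prk_add prk_mult prk_sub prk_const prk_var)
  apply assumption+
  by auto

lemma prkP_eq: "prk A \<Longrightarrow> prk B \<Longrightarrow> prkP (\<lambda>e. A e = B e)"
  unfolding prkP_def
  apply (rule prk_eqI[where F="\<lambda>e. 1 - ((A e - B e) + (B e - A e))"])
  apply (intro prk_add prk_mult prk_sub prk_const prk_var)
  apply assumption+
  by auto

lemma prkP_less: "prk A \<Longrightarrow> prk B \<Longrightarrow> prkP (\<lambda>e. A e < B e)"
  unfolding prkP_def
  apply (rule prk_eqI[where F="\<lambda>e. 1 - (1 - (B e - A e))"])
  apply (intro prk_add prk_mult prk_sub prk_const prk_var)
  apply assumption+
  by auto

lemma prkP_le: "prk A \<Longrightarrow> prk B \<Longrightarrow> prkP (\<lambda>e. A e \<le> B e)"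
  unfolding prkP_def
  apply (rule prk_eqI[where F="\<lambda>e. 1 - (A e - B e)"])
  apply (intro prk_add prk_mult prk_sub prk_const prk_var)
  apply assumption+
  by auto

lemma prkP_conj: "prkP P \<Longrightarrow> prkP Q \<Longrightarrow> prkP (\<lambda>e. P e \<and> Q e)"
  unfolding prkP_def
  apply (rule prk_eqI[where F="\<lambda>e. (if P e then 1 else 0) * (if Q e then 1 else 0)"])
  apply (intro prk_add prk_mult prk_sub prk_const prk_var)
  apply assumption+
  by auto

lemma prkP_not: "prkP P \<Longrightarrow> prkP (\<lambda>e. \<not> P e)"
  unfolding prkP_def
  apply (rule prk_eqI[where F="\<lambda>e. 1 - (if P e then 1 else 0)"])
  apply (intro prk_add prk_mult prk_sub prk_const prk_var)
  apply assumption+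
  by auto

lemma prkP_disj: "prkP P \<Longrightarrow> prkP Q \<Longrightarrow> prkP (\<lambda>e. P e \<or> Q e)"
  unfolding prkP_def
  apply (rule prk_eqI[where F="\<lambda>e. 1 - (1 - (if P e then 1 else 0)) * (1 - (if Q e then 1 else 0))"])
  apply (intro prk_add prk_mult prk_sub prk_const prk_var)
  apply assumption+
  by auto

lemma prkP_imp: "prkP P \<Longrightarrow> prkP Q \<Longrightarrow> prkP (\<lambda>e. P e \<longrightarrow> Q e)"
  unfolding prkP_def
  apply (rule prk_eqI[where F="\<lambda>e. 1 - (if P e then 1 else 0) * (1 - (if Q e then 1 else 0))"])
  apply (intro prk_add prk_mult prk_sub prk_const prk_var)
  apply assumption+
  by auto

lemma prkP_const: "prkP (\<lambda>e. b)"
  unfolding prkP_def by (rule prk_const)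

lemma prk_sum: "prk N \<Longrightarrow> prk (\<lambda>e. F (e 0) (\<lambda>i. e (Suc i))) \<Longrightarrow> prk (\<lambda>e. \<Sum>k<N e. F k e)"
proof -
  assume N: "prk N" and F: "prk (\<lambda>e. F (e 0) (\<lambda>i. e (Suc i)))"
  have F': "prk (\<lambda>e. F (e 1) (\<lambda>i. e (Suc (Suc i))))" using prk_shift[OF F] by simp
  have "prk (\<lambda>e. rec_nat 0 (\<lambda>y r. r + F y e) (N e))"
    by (rule prk_rec[where G="\<lambda>r y e. r + F y e"]) (intro prk_add prk_var prk_const F' N)+
  moreover have "rec_nat 0 (\<lambda>y r. r + F y e) n = (\<Sum>k<n. F k e)" for n e by (induction n) auto
  ultimately show ?thesis by simp
qed

lemma prkP_all: "prk N \<Longrightarrow> prkP (\<lambda>e. P (e 0) (\<lambda>i. e (Suc i))) \<Longrightarrow> prkP (\<lambda>e. \<forall>k<N e. P k e)"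
  unfolding prkP_def
proof -
  assume N: "prk N" and P: "prk (\<lambda>e. if P (e 0) (\<lambda>i. e (Suc i)) then 1 else 0)"
  have "prk (\<lambda>e. 1 - (\<Sum>k<N e. 1 - (if P k e then 1 else 0)))"
    using N P by (intro prk_sub prk_sum prk_const)
  moreover have "(1 - (\<Sum>k<N e. 1 - (if P k e then 1 else 0))) = (if \<forall>k<N e. P k e then 1 else (0::nat))" for e
  proof (cases "\<forall>k<N e. P k e")
    case False
    then obtain k where "k < N e" "\<not> P k e" by auto
    then have "1 \<le> (\<Sum>k<N e. 1 - (if P k e then 1 else 0::nat))"
      using member_le_sum[of k "{..<N e}" "\<lambda>k. 1 - (if P k e then 1 else 0::nat)"] by auto
    then show ?thesis using False by simp
  qed simp
  ultimately show "prk (\<lambda>e. if \<forall>k<N e. P k e then 1 else 0)" by simp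
qed

lemma prkP_ex: "prk N \<Longrightarrow> prkP (\<lambda>e. P (e 0) (\<lambda>i. e (Suc i))) \<Longrightarrow> prkP (\<lambda>e. \<exists>k<N e. P k e)"
proof -
  assume "prk N" "prkP (\<lambda>e. P (e 0) (\<lambda>i. e (Suc i)))"
  then have "prkP (\<lambda>e. \<not> (\<forall>k<N e. \<not> P k e))" by (intro prkP_not prkP_all prkP_not)
  then show ?thesis by simp
qed

lemma prkP_odd: "prk A \<Longrightarrow> prkP (\<lambda>e. odd (A e))"
proof -
  assume A: "prk A"
  have "prk (\<lambda>e. rec_nat 0 (\<lambda>y r. 1 - r) (e 0))"
    by (rule prk_rec[where G="\<lambda>r y e. 1 - r"]) (intro prk_sub prk_var prk_const)+
  moreover have "rec_nat 0 (\<lambda>y r. 1 - r) n = (if odd n then 1 else (0::nat))" for n :: nat by (induction n) auto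
  ultimately have "prk (\<lambda>e. if odd (e 0) then 1 else 0)" by simp
  from prk_comp1[OF this A] show ?thesis unfolding prkP_def .
qed

lemma prkP_even: "prk A \<Longrightarrow> prkP (\<lambda>e. even (A e))"
  using prkP_not[OF prkP_odd] by simp

lemma div_as_sum: "(a::nat) div b = (if b = 0 then 0 else \<Sum>q<a. if (q + 1) * b \<le> a then 1 else 0)"
proof (cases "b = 0")
  case False
  have eq: "{..<a} \<inter> {q. (q + 1) * b \<le> a} = {..<a div b}"
  proof -
    have iff: "(q + 1) * b \<le> a \<longleftrightarrow> q < a div b" for q
      using False less_eq_div_iff_mult_less_eq[of b "q+1" a] by (simp only: Suc_le_eq Suc_eq_plus1[symmetric])
    have le: "a div b \<le> a" by simp
    show ?thesis
      apply (rule set_eqI)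
      apply (simp only: Int_iff lessThan_iff mem_Collect_eq iff)
      using le by arith
  qed
  have "(\<Sum>q<a. if (q + 1) * b \<le> a then 1 else 0) = card ({..<a} \<inter> {q. (q + 1) * b \<le> a})"
    by (simp add: sum.If_cases)
  also have "\<dots> = a div b" unfolding eq by simp
  finally show ?thesis using False by simp
qed simp

lemma prk_div: "prk A \<Longrightarrow> prk B \<Longrightarrow> prk (\<lambda>e. A e div B e)"
proof -
  assume "prk A" "prk B"
  have "prk (\<lambda>e. if e 1 = 0 then 0 else \<Sum>q<e 0. if (q + 1) * e 1 \<le> e 0 then 1 else 0)"
    by (intro prk_if prkP_eq prk_var prk_const prk_sum prkP_le prk_mult prk_add)
  then have "prk (\<lambda>e. e 0 div e 1)" by (simp only: div_as_sum[symmetric])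
  from prk_comp2[OF this] show ?thesis using \<open>prk A\<close> \<open>prk B\<close> .
qed

lemma prk_mod: "prk A \<Longrightarrow> prk B \<Longrightarrow> prk (\<lambda>e. A e mod B e)"
  apply (rule prk_eqI[where F="\<lambda>e. A e - B e * (A e div B e)"])
  apply (intro prk_sub prk_mult prk_div; assumption)
  by (simp add: minus_mult_div_eq_mod)

lemmas prk_basic = prk_var prk_const



lemmas prk_intros = prk_var prk_const prk_add prk_sub prk_mult prk_pow prk_div prk_mod prk_Suc prk_if prk_sum
  prkP_eq prkP_less prkP_le prkP_conj prkP_not prkP_disj prkP_imp prkP_const prkP_all prkP_ex prkP_odd prkP_even

lemma sum_unique:
  assumes "P x0" "x0 < N" "\<And>x. P x \<Longrightarrow> x = x0"
  shows "(\<Sum>x<N. if P x then x else (0::nat)) = x0"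
proof -
  have "(\<Sum>x<N. if P x then x else (0::nat)) = (\<Sum>x<N. if x = x0 then x else 0)"
    by (intro sum.cong refl) (metis assms(1) assms(3))
  also have "\<dots> = x0" using assms(2) by (simp add: sum.delta')
  finally show ?thesis .
qed

lemma prk_pair: "prk A \<Longrightarrow> prk B \<Longrightarrow> prk (\<lambda>e. pair (A e) (B e))"
  apply (rule prk_eqI[where F="\<lambda>e. (A e + B e) * (A e + B e + 1) div 2 + A e"])
   apply (intro prk_intros; assumption)
  by (simp add: pair_def prod_encode_def triangle_def)

lemma fst_unpair_sum: "fst (unpair m) = (\<Sum>x<Suc m. if (\<exists>y<Suc m. pair x y = m) then x else 0)"
proof -
  obtain x y where xy: "prod_decode m = (x, y)" by (cases "prod_decode m")
  have m: "m = pair x y" using prod_decode_inverse[of m] xy by (simp add: pair_def)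
  have "(\<Sum>x<Suc m. if (\<exists>y<Suc m. pair x y = m) then x else 0) = x"
  proof (rule sum_unique)
    show "\<exists>y'<Suc m. pair x y' = m" using m le_prod_encode_2[of y x] by (auto simp: pair_def)
    show "x < Suc m" using m le_prod_encode_1[of x y] by (auto simp: pair_def)
    show "x' = x" if "\<exists>y'<Suc m. pair x' y' = m" for x' using that m by (auto simp: pair_def)
  qed
  then show ?thesis using xy by (simp add: unpair_def)
qed

lemma snd_unpair_sum: "snd (unpair m) = (\<Sum>y<Suc m. if (\<exists>x<Suc m. pair x y = m) then y else 0)"
proof -
  obtain x y where xy: "prod_decode m = (x, y)" by (cases "prod_decode m")
  have m: "m = pair x y" using prod_decode_inverse[of m] xy by (simp add: pair_def)
  have "(\<Sum>y<Suc m. if (\<exists>x<Suc m. pair x y = m) then y else 0) = y"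
  proof (rule sum_unique)
    show "\<exists>x'<Suc m. pair x' y = m" using m le_prod_encode_1[of x y] by (auto simp: pair_def)
    show "y < Suc m" using m le_prod_encode_2[of y x] by (auto simp: pair_def)
    show "y' = y" if "\<exists>x'<Suc m. pair x' y' = m" for y' using that m by (auto simp: pair_def)
  qed
  then show ?thesis using xy by (simp add: unpair_def)
qed

lemma prk_fst_unpair: "prk A \<Longrightarrow> prk (\<lambda>e. fst (unpair (A e)))"
proof -
  assume A: "prk A"
  have "prk (\<lambda>e. \<Sum>x<Suc (e 0). if (\<exists>y<Suc (e 0). pair x y = e 0) then x else 0)"
    by (intro prk_intros prk_pair)
  then have "prk (\<lambda>e. fst (unpair (e 0)))" by (simp only: fst_unpair_sum)
  from prk_comp1[OF this A] show ?thesis .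
qed

lemma prk_snd_unpair: "prk A \<Longrightarrow> prk (\<lambda>e. snd (unpair (A e)))"
proof -
  assume A: "prk A"
  have "prk (\<lambda>e. \<Sum>y<Suc (e 0). if (\<exists>x<Suc (e 0). pair x y = e 0) then y else 0)"
    by (intro prk_intros prk_pair)
  then have "prk (\<lambda>e. snd (unpair (e 0)))" by (simp only: snd_unpair_sum)
  from prk_comp1[OF this A] show ?thesis .
qed

lemma fp_rec: "rec_nat (pair 1 1) (\<lambda>y r. pair (snd (unpair r)) (fst (unpair r) + snd (unpair r))) n
   = pair (fibZ n) (fibZ (Suc n))"
  by (induction n) (simp_all add: unpair_def pair_def)

lemma prk_fibZ: "prk A \<Longrightarrow> prk (\<lambda>e. fibZ (A e))"
proof -
  assume A: "prk A"
  have "prk (\<lambda>e. rec_nat (pair 1 1) (\<lambda>y r. pair (snd (unpair r)) (fst (unpair r) + snd (unpair r))) (e 0))"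
    by (rule prk_rec[where G="\<lambda>r y e. pair (snd (unpair r)) (fst (unpair r) + snd (unpair r))"])
       (intro prk_intros prk_pair prk_fst_unpair prk_snd_unpair)+
  then have "prk (\<lambda>e. fst (unpair (rec_nat (pair 1 1) (\<lambda>y r. pair (snd (unpair r)) (fst (unpair r) + snd (unpair r))) (e 0))))"
    by (rule prk_fst_unpair)
  then have "prk (\<lambda>e. fibZ (e 0))" by (simp only: fp_rec) (simp add: unpair_def pair_def)
  from prk_comp1[OF this A] show ?thesis .
qed



lemma fib_pos: "1 \<le> fibZ n"
  by (induction n rule: fibZ.induct) auto

lemma fib_Suc_mono: "fibZ n \<le> fibZ (Suc n)"
  by (cases n rule: fibZ.cases) auto

lemma fib_mono: "a \<le> b \<Longrightarrow> fibZ a \<le> fibZ b"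
  by (rule lift_Suc_mono_le[of fibZ]) (auto intro: fib_Suc_mono)

lemma fib_SucSuc: "fibZ (Suc (Suc n)) = fibZ (Suc n) + fibZ n" by simp

lemma fib_ge: "e \<le> fibZ e"
proof (induction e rule: fibZ.induct)
  case (3 n) then show ?case using fib_pos[of n] by simp
qed auto

lemma fib_Suc_k: "1 \<le> k \<Longrightarrow> fibZ (Suc k) = fibZ k + fibZ (k - 1)"
  by (cases k) auto

lemma zeck_ok_subset: "zeck_ok S \<Longrightarrow> T \<subseteq> S \<Longrightarrow> zeck_ok T"
  unfolding zeck_ok_def by (auto intro: finite_subset)

lemma zeck_bound: "zeck_ok S \<Longrightarrow> (\<forall>e\<in>S. e \<le> k) \<Longrightarrow> (\<Sum>e\<in>S. fibZ e) < fibZ (Suc k)"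
proof (induction k arbitrary: S rule: nat_less_induct)
  case (1 k)
  note ok = \<open>zeck_ok S\<close> and bd = \<open>\<forall>e\<in>S. e \<le> k\<close>
  have fin: "finite S" and n0: "0 \<notin> S" and nc: "\<And>i. i \<in> S \<Longrightarrow> Suc i \<notin> S"
    using ok by (auto simp: zeck_ok_def)
  show ?case
  proof (cases "k = 0")
    case True
    then have "S = {}" using bd n0 by auto
    then show ?thesis using fib_pos[of "Suc k"] by simp
  next
    case False
    show ?thesis
    proof (cases "k \<in> S")
      case False
      then have "\<forall>e\<in>S. e \<le> k - 1" using bd by (metis Suc_pred' \<open>k \<noteq> 0\<close> bot_nat_0.not_eq_extremum le_SucE)
      moreover have "k - 1 < k" using \<open>k \<noteq> 0\<close> by simp
      ultimately have "(\<Sum>e\<in>S. fibZ e) < fibZ (Suc (k - 1))" using 1 ok by blast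
      also have "\<dots> \<le> fibZ (Suc k)" by (rule fib_mono) simp
      finally show ?thesis .
    next
      case True
      have km1: "k - 1 \<notin> S" using nc[of "k-1"] True \<open>k \<noteq> 0\<close> by auto
      let ?S' = "S - {k}"
      have ok': "zeck_ok ?S'" using ok by (rule zeck_ok_subset) auto
      have bd': "\<forall>e\<in>?S'. e \<le> k - 2"
      proof
        fix e assume e: "e \<in> ?S'"
        then have "e \<in> S" "e \<noteq> k" by auto
        then have "e \<le> k" "e \<noteq> k" "e \<noteq> k - 1" "e \<noteq> 0" using bd km1 n0 by metis+
        then show "e \<le> k - 2" by arith
      qed
      have "k - 2 < k" using \<open>k \<noteq> 0\<close> by simp
      then have "(\<Sum>e\<in>?S'. fibZ e) < fibZ (Suc (k - 2))"
        using 1 ok' bd' by blast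
      then have lt: "(\<Sum>e\<in>?S'. fibZ e) < fibZ (k - 1)"
      proof -
        assume a: "(\<Sum>e\<in>?S'. fibZ e) < fibZ (Suc (k - 2))"
        show ?thesis
        proof (cases "k = 1")
          case True
          have "e \<notin> ?S'" for e
          proof
            assume e: "e \<in> ?S'"
            then have "e \<le> 0" using bd' True by auto
            then show False using e n0 by auto
          qed
          then have "?S' = {}" by blast
          then show ?thesis using fib_pos[of "k - 1"] by (simp only: sum.empty)
        next
          case False
          then have "Suc (k - 2) = k - 1" using \<open>k \<noteq> 0\<close> by arith
          then show ?thesis using a by simp
        qed
      qed
      have "(\<Sum>e\<in>S. fibZ e) = fibZ k + (\<Sum>e\<in>?S'. fibZ e)"
        using True fin by (simp add: sum.remove)
      also have "\<dots> < fibZ k + fibZ (k - 1)" using lt by simp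
      also have "\<dots> = fibZ (Suc k)" using fib_Suc_k[of k] \<open>k \<noteq> 0\<close> by simp
      finally show ?thesis .
    qed
  qed
qed

lemma zeck_unique_aux:
  "zeck_ok S \<Longrightarrow> zeck_ok T \<Longrightarrow> (\<Sum>e\<in>S. fibZ e) = n \<Longrightarrow> (\<Sum>e\<in>T. fibZ e) = n \<Longrightarrow> S = T"
proof (induction n arbitrary: S T rule: less_induct)
  case (less n)
  have finS: "finite S" and finT: "finite T" using less.prems by (auto simp: zeck_ok_def)
  show ?case
  proof (cases "S = {} \<or> T = {}")
    case True
    have "S = {} \<Longrightarrow> T = {}"
    proof -
      assume "S = {}"
      then have "(\<Sum>e\<in>T. fibZ e) = 0" using less.prems by simp
      then have z: "\<forall>e\<in>T. fibZ e = 0" using finT by simp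
      show "T = {}"
      proof (rule ccontr)
        assume "T \<noteq> {}"
        then obtain e where "e \<in> T" by blast
        then show False using z fib_pos[of e] by simp
      qed
    qed
    moreover have "T = {} \<Longrightarrow> S = {}"
    proof -
      assume "T = {}"
      then have "(\<Sum>e\<in>S. fibZ e) = 0" using less.prems by simp
      then have z: "\<forall>e\<in>S. fibZ e = 0" using finS by simp
      show "S = {}"
      proof (rule ccontr)
        assume "S \<noteq> {}"
        then obtain e where "e \<in> S" by blast
        then show False using z fib_pos[of e] by simp
      qed
    qed
    ultimately show ?thesis using True by auto
  next
    case False
    define m where "m = Max S"
    define m' where "m' = Max T"
    have mS: "m \<in> S" and mS': "\<forall>e\<in>S. e \<le> m" using False finS by (auto simp: m_def)
    have mT: "m' \<in> T" and mT': "\<forall>e\<in>T. e \<le> m'" using False finT by (auto simp: m'_def)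
    have key: "\<not> a < b" if "zeck_ok A" "zeck_ok B" "a \<in> A" "\<forall>e\<in>A. e \<le> a" "b \<in> B"
      "(\<Sum>e\<in>A. fibZ e) = (\<Sum>e\<in>B. fibZ e)" for A B a b
    proof
      assume ab: "a < b"
      have "(\<Sum>e\<in>A. fibZ e) < fibZ (Suc a)" using zeck_bound that by blast
      also have "\<dots> \<le> fibZ b" using ab by (intro fib_mono) simp
      also have "\<dots> \<le> (\<Sum>e\<in>B. fibZ e)" using that(2,5) by (intro member_le_sum) (auto simp: zeck_ok_def)
      finally show False using that(6) by simp
    qed
    have "m = m'"
      using key[of S T m m'] key[of T S m' m] less.prems mS mS' mT mT' by force
    let ?S' = "S - {m}" and ?T' = "T - {m}"
    have sS: "(\<Sum>e\<in>S. fibZ e) = fibZ m + (\<Sum>e\<in>?S'. fibZ e)" using mS finS by (simp add: sum.remove)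
    have sT: "(\<Sum>e\<in>T. fibZ e) = fibZ m + (\<Sum>e\<in>?T'. fibZ e)" using mT finT \<open>m = m'\<close> by (simp add: sum.remove)
    have "(\<Sum>e\<in>?S'. fibZ e) < n" using sS less.prems(3) fib_pos[of m] by simp
    moreover have "zeck_ok ?S'" "zeck_ok ?T'" using less.prems by (auto intro: zeck_ok_subset)
    ultimately have "?S' = ?T'" using less.IH sS sT less.prems by (metis add_left_cancel)
    then show ?thesis using mS mT \<open>m = m'\<close> by blast
  qed
qed

lemma zeck_exists: "\<exists>S. zeck_ok S \<and> (\<Sum>e\<in>S. fibZ e) = n"
proof (induction n rule: less_induct)
  case (less n)
  show ?case
  proof (cases "n = 0")
    case True
    then show ?thesis by (intro exI[of _ "{}"]) (simp add: zeck_ok_def)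
  next
    case False
    have ex: "\<exists>j. n < fibZ j" using fib_ge[of "Suc n"] by (intro exI[of _ "Suc n"]) simp
    define m0 where "m0 = (LEAST j. n < fibZ j)"
    have m0: "n < fibZ m0" unfolding m0_def by (rule LeastI_ex[OF ex])
    have m0min: "\<And>j. j < m0 \<Longrightarrow> fibZ j \<le> n" unfolding m0_def using not_less_Least by (metis not_le)
    have "m0 \<noteq> 0" using m0 False by (cases m0) auto
    then obtain m where m: "m0 = Suc m" by (cases m0) auto
    have "m \<noteq> 0" using m m0 False by (cases m) auto
    have fm: "fibZ m \<le> n" using m0min m by simp
    define r where "r = n - fibZ m"
    have rlt: "r < n" using fib_pos[of m] fm False by (simp add: r_def)
    have rlt2: "r < fibZ (m - 1)" using m0 m fib_Suc_k[of m] \<open>m \<noteq> 0\<close> fm by (simp add: r_def)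
    obtain T where T: "zeck_ok T" "(\<Sum>e\<in>T. fibZ e) = r" using less.IH[OF rlt] by blast
    have finT: "finite T" using T by (simp add: zeck_ok_def)
    have Tlt: "e < m - 1" if "e \<in> T" for e
    proof (rule ccontr)
      assume "\<not> e < m - 1"
      then have "fibZ (m - 1) \<le> fibZ e" by (intro fib_mono) simp
      also have "\<dots> \<le> r" using T that finT by (metis member_le_sum zero_le)
      finally show False using rlt2 by simp
    qed
    have mT: "m \<notin> T" using Tlt by fastforce
    have "zeck_ok (insert m T)"
      using T(1) Tlt \<open>m \<noteq> 0\<close> unfolding zeck_ok_def
      by (auto dest: Tlt)
    moreover have "(\<Sum>e\<in>insert m T. fibZ e) = n"
      using mT finT T(2) fm by (simp add: r_def)
    ultimately show ?thesis by blast
  qed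
qed

lemma Z_spec: "zeck_ok (Z n) \<and> (\<Sum>e\<in>Z n. fibZ e) = n"
proof -
  have "\<exists>!S. zeck_ok S \<and> (\<Sum>e\<in>S. fibZ e) = n"
    using zeck_exists zeck_unique_aux by blast
  then show ?thesis unfolding Z_def by (rule theI')
qed

lemma Z_unique: "zeck_ok S \<Longrightarrow> (\<Sum>e\<in>S. fibZ e) = n \<Longrightarrow> Z n = S"
  using Z_spec zeck_unique_aux by blast

lemma Z_le: "e \<in> Z n \<Longrightarrow> e \<le> n"
proof -
  assume e: "e \<in> Z n"
  have "finite (Z n)" using Z_spec by (simp add: zeck_ok_def)
  then have "fibZ e \<le> (\<Sum>e\<in>Z n. fibZ e)" using e by (intro member_le_sum) auto
  then show ?thesis using Z_spec fib_ge[of e] by simp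
qed



lemma sum_unique2:
  assumes "P x0" "x0 < N" "\<And>x. P x \<Longrightarrow> x = x0"
  shows "(\<Sum>x<N. if P x then x else (0::nat)) = x0"
proof -
  have "(\<Sum>x<N. if P x then x else (0::nat)) = (\<Sum>x<N. if x = x0 then x else 0)"
    by (intro sum.cong refl) (metis assms(1) assms(3))
  also have "\<dots> = x0" using assms(2) by (simp add: sum.delta')
  finally show ?thesis .
qed

lemma bits_sum:
  assumes fin: "finite S"
  shows "odd ((\<Sum>e\<in>S. (2::nat) ^ e) div 2 ^ i) \<longleftrightarrow> i \<in> S"
proof -
  define x where "x = (\<Sum>e\<in>S. if e < i then (2::nat) ^ e else 0)"
  define c where "c = (\<Sum>e\<in>S. if e = i then (2::nat) ^ e else 0)"
  define y where "y = (\<Sum>e\<in>S. if i < e then (2::nat) ^ e else 0)"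
  have split: "(\<Sum>e\<in>S. (2::nat) ^ e) = x + c + y"
    unfolding x_def c_def y_def sum.distrib[symmetric]
    by (intro sum.cong refl) auto
  have "x = (\<Sum>e\<in>{e\<in>S. e < i}. 2 ^ e)" unfolding x_def using fin by (simp add: sum.inter_filter)
  also have "\<dots> \<le> (\<Sum>e\<in>{q. q < i}. 2 ^ e)" by (intro sum_mono2) auto
  also have "\<dots> = 2 ^ i - 1" using mask_eq_sum_exp[where ?'a=nat] by simp
  finally have "x \<le> 2 ^ i - 1" .
  then have xlt: "x < 2 ^ i" using zero_less_power[of "2::nat" i] by linarith
  have cval: "c = (if i \<in> S then 2 ^ i else 0)" unfolding c_def using fin by (simp add: sum.delta')
  have "2 ^ Suc i dvd y" unfolding y_def
  proof (intro dvd_sum)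
    fix e assume "e \<in> S"
    show "2 ^ Suc i dvd (if i < e then (2::nat) ^ e else 0)"
      by (cases "i < e") (auto intro: le_imp_power_dvd simp del: power_Suc)
  qed
  then obtain h where h: "y = 2 ^ Suc i * h" by blast
  define d where "d = (if i \<in> S then 1 else 0) + 2 * h"
  have eq': "x + c + y = x + d * 2 ^ i" by (simp add: cval h d_def algebra_simps)
  have "(\<Sum>e\<in>S. (2::nat) ^ e) div 2 ^ i = (x + d * 2 ^ i) div 2 ^ i" by (simp only: split eq')
  also have "\<dots> = d + x div 2 ^ i" by simp
  also have "x div 2 ^ i = 0" using xlt by simp
  finally show ?thesis by (simp add: d_def)
qed

lemma bit_lt: "odd ((b::nat) div 2 ^ e) \<Longrightarrow> e < b"
proof -
  assume "odd (b div 2 ^ e)"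
  then have "b div 2 ^ e \<noteq> 0" by (metis even_zero)
  then have "2 ^ e \<le> b" by (simp add: div_eq_0_iff not_less)
  moreover have "e < 2 ^ e" by (rule less_exp)
  ultimately show ?thesis by linarith
qed

lemma bits_eq: "(\<And>e. odd ((b::nat) div 2 ^ e) \<longleftrightarrow> odd ((c::nat) div 2 ^ e)) \<Longrightarrow> b = c"
  by (simp add: bit_eq_iff bit_iff_odd)

definition Qz :: "nat \<Rightarrow> nat \<Rightarrow> bool" where
  "Qz n b \<longleftrightarrow> \<not> odd (b div 2 ^ 0) \<and> (\<forall>e<b. odd (b div 2 ^ e) \<longrightarrow> \<not> odd (b div 2 ^ Suc e))
     \<and> (\<Sum>e<b. if odd (b div 2 ^ e) then fibZ e else 0) = n"

definition zb0 :: "nat \<Rightarrow> nat" where "zb0 n = (\<Sum>e\<in>Z n. 2 ^ e)"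

lemma finZ: "finite (Z n)" using Z_spec by (simp add: zeck_ok_def)

lemma zb0_bits: "odd (zb0 n div 2 ^ e) \<longleftrightarrow> e \<in> Z n"
  unfolding zb0_def by (rule bits_sum[OF finZ])

lemma Qz_iff: "Qz n b \<longleftrightarrow> b = zb0 n"
proof
  assume Q: "Qz n b"
  define S where "S = {e. odd (b div 2 ^ e)}"
  have Ssub: "S \<subseteq> {..<b}"
  proof
    fix e assume "e \<in> S"
    then show "e \<in> {..<b}" using bit_lt[of b e] by (simp add: S_def)
  qed
  then have finS: "finite S" by (rule finite_subset) simp
  have ok: "zeck_ok S"
    unfolding zeck_ok_def
  proof (intro conjI ballI)
    show "finite S" by (rule finS)
    show "0 \<notin> S" using Q by (simp add: Qz_def S_def)
    fix i assume i: "i \<in> S"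
    then have "i < b" using Ssub by auto
    then show "Suc i \<notin> S" using Q i by (simp add: Qz_def S_def)
  qed
  have Seq: "{e \<in> {..<b}. odd (b div 2 ^ e)} = S" using Ssub by (auto simp: S_def)
  have "(\<Sum>e<b. if odd (b div 2 ^ e) then fibZ e else 0) = (\<Sum>e\<in>S. fibZ e)"
    by (simp only: sum.inter_filter[OF finite_lessThan, symmetric] Seq)
  then have "(\<Sum>e\<in>S. fibZ e) = n" using Q by (simp add: Qz_def)
  then have "Z n = S" using ok Z_unique by blast
  then show "b = zb0 n" using zb0_bits by (intro bits_eq) (simp add: S_def)
next
  assume b: "b = zb0 n"
  have bits: "odd (b div 2 ^ e) \<longleftrightarrow> e \<in> Z n" for e using b zb0_bits by simp
  have ok: "zeck_ok (Z n)" and sm: "(\<Sum>e\<in>Z n. fibZ e) = n" using Z_spec by auto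
  have Zsub: "Z n \<subseteq> {..<b}"
  proof
    fix e assume "e \<in> Z n"
    then show "e \<in> {..<b}" using bit_lt[of b e] bits[of e] by simp
  qed
  have Zeq: "{e \<in> {..<b}. odd (b div 2 ^ e)} = Z n" using Zsub bits by auto
  have "(\<Sum>e<b. if odd (b div 2 ^ e) then fibZ e else 0) = (\<Sum>e\<in>Z n. fibZ e)"
    by (simp only: sum.inter_filter[OF finite_lessThan, symmetric] Zeq)
  moreover have "\<not> odd (b div 2 ^ 0)" using ok bits[of 0] by (simp add: zeck_ok_def)
  moreover have "\<forall>e<b. odd (b div 2 ^ e) \<longrightarrow> \<not> odd (b div 2 ^ Suc e)"
    using ok bits by (simp add: zeck_ok_def del: power_Suc)
  ultimately show "Qz n b" using sm unfolding Qz_def by simp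
qed

lemma zb0_bound: "zb0 n < 2 ^ Suc n"
proof -
  have "zb0 n \<le> (\<Sum>e\<in>{q. q < Suc n}. 2 ^ e)"
    unfolding zb0_def using Z_le by (intro sum_mono2) (auto simp: less_Suc_eq_le)
  also have "\<dots> = 2 ^ Suc n - 1" by (rule mask_eq_sum_exp[where ?'a=nat, symmetric])
  finally have "zb0 n \<le> 2 ^ Suc n - 1" .
  then show ?thesis using zero_less_power[of "2::nat" "Suc n"] by linarith
qed

lemma zb0_sum: "zb0 n = (\<Sum>b<2 ^ Suc n. if Qz n b then b else 0)"
  by (rule sum_unique2[symmetric]) (use zb0_bound[of n] in \<open>auto simp: Qz_iff\<close>)



lemma nth_rev_sorted:
  assumes fin: "finite S" and j: "j < card S"
  shows "rev (sorted_list_of_set S) ! j \<in> S \<and> card {e'\<in>S. rev (sorted_list_of_set S) ! j < e'} = j"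
proof -
  define ys where "ys = sorted_list_of_set S"
  define L where "L = length ys"
  have L: "L = card S" unfolding L_def ys_def by simp
  define k where "k = L - Suc j"
  have kL: "k < L" using j L by (simp add: k_def)
  have rv: "rev ys ! j = ys ! k" using j L by (simp add: rev_nth k_def L_def)
  have strict: "sorted_wrt (<) ys" unfolding ys_def by (rule strict_sorted_list_of_set)
  have dist: "distinct ys" unfolding ys_def by simp
  have setys: "set ys = S" unfolding ys_def using fin by simp
  have mem: "ys ! k \<in> S" using kL setys L_def by (metis nth_mem)
  have eqset: "{e'\<in>S. ys ! k < e'} = (\<lambda>p. ys ! p) ` {k<..<L}"
  proof
    show "{e'\<in>S. ys ! k < e'} \<subseteq> (\<lambda>p. ys ! p) ` {k<..<L}"
    proof
      fix e' assume e': "e' \<in> {e'\<in>S. ys ! k < e'}"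
      then obtain p where p: "p < L" "ys ! p = e'" using setys by (auto simp: in_set_conv_nth L_def)
      have "k < p"
      proof (rule ccontr)
        assume "\<not> k < p"
        then have "p = k \<or> p < k" by auto
        then show False
        proof
          assume "p = k" then show False using e' p by auto
        next
          assume "p < k"
          then have "ys ! p < ys ! k" using strict kL by (simp add: sorted_wrt_nth_less L_def)
          then show False using e' p by auto
        qed
      qed
      then show "e' \<in> (\<lambda>p. ys ! p) ` {k<..<L}" using p by auto
    qed
    show "(\<lambda>p. ys ! p) ` {k<..<L} \<subseteq> {e'\<in>S. ys ! k < e'}"
    proof
      fix e' assume "e' \<in> (\<lambda>p. ys ! p) ` {k<..<L}"
      then obtain p where p: "k < p" "p < L" "e' = ys ! p" by auto
      then have "ys ! k < ys ! p" using strict by (simp add: sorted_wrt_nth_less L_def)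
      moreover have "ys ! p \<in> S" using p setys by (metis nth_mem L_def)
      ultimately show "e' \<in> {e'\<in>S. ys ! k < e'}" using p by simp
    qed
  qed
  have inj: "inj_on (\<lambda>p. ys ! p) {k<..<L}"
    using dist by (auto simp: inj_on_def nth_eq_iff_index_eq L_def)
  have "card {e'\<in>S. ys ! k < e'} = card {k<..<L}" unfolding eqset using inj by (rule card_image)
  also have "\<dots> = j" using j L by (simp add: k_def)
  finally show ?thesis using rv mem by (simp add: ys_def)
qed

lemma cnt_inj:
  fixes S :: "nat set"
  assumes fin: "finite S" and "a \<in> S" "b \<in> S" and eq: "card {e'\<in>S. a < e'} = card {e'\<in>S. b < e'}"
  shows "a = b"
proof (rule ccontr)
  assume "a \<noteq> b"
  have lt: "card {e'\<in>S. y < e'} < card {e'\<in>S. x < e'}" if "x < y" "y \<in> S" for x y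
  proof (rule psubset_card_mono)
    show "finite {e'\<in>S. x < e'}" using fin by simp
    have "{e'\<in>S. y < e'} \<subseteq> {e'\<in>S. x < e'}" using that(1) by auto
    moreover have "y \<in> {e'\<in>S. x < e'}" "y \<notin> {e'\<in>S. y < e'}" using that by auto
    ultimately show "{e'\<in>S. y < e'} \<subset> {e'\<in>S. x < e'}" by blast
  qed
  show False
  proof (cases "a < b")
    case True then show False using lt[of a b] eq \<open>b \<in> S\<close> by linarith
  next
    case False then have "b < a" using \<open>a \<noteq> b\<close> by simp
    then show False using lt[of b a] eq \<open>a \<in> S\<close> by linarith
  qed
qed

lemma card_Z: "card (Z n) = (\<Sum>e<Suc n. if odd (zb0 n div 2 ^ e) then 1 else 0)"
proof -
  have "{e \<in> {..<Suc n}. odd (zb0 n div 2 ^ e)} = Z n" using zb0_bits Z_le by (auto simp: less_Suc_eq_le)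
  then show ?thesis by (simp add: sum.inter_filter[OF finite_lessThan, symmetric])
qed

lemma cnt_Z: "card {e'\<in>Z n. e < e'} = (\<Sum>e'<Suc n. if odd (zb0 n div 2 ^ e') \<and> e < e' then 1 else 0)"
proof -
  have "{e' \<in> {..<Suc n}. odd (zb0 n div 2 ^ e') \<and> e < e'} = {e'\<in>Z n. e < e'}"
    using zb0_bits Z_le by (auto simp: less_Suc_eq_le)
  then show ?thesis by (simp add: sum.inter_filter[OF finite_lessThan, symmetric])
qed

lemma zlist_sum:
  assumes j: "j < card (Z n)"
  shows "zlist n ! j = (\<Sum>e<Suc n. if odd (zb0 n div 2 ^ e) \<and> card {e'\<in>Z n. e < e'} = j then e else 0)"
proof -
  have P: "zlist n ! j \<in> Z n \<and> card {e'\<in>Z n. zlist n ! j < e'} = j"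
    unfolding zlist_def using nth_rev_sorted[OF finZ j] .
  show ?thesis
  proof (rule sum_unique2[symmetric])
    show "odd (zb0 n div 2 ^ (zlist n ! j)) \<and> card {e'\<in>Z n. zlist n ! j < e'} = j"
      using P zb0_bits by simp
    show "zlist n ! j < Suc n" using P Z_le by (simp add: less_Suc_eq_le)
    fix x assume "odd (zb0 n div 2 ^ x) \<and> card {e'\<in>Z n. x < e'} = j"
    then show "x = zlist n ! j" using P zb0_bits cnt_inj[OF finZ] by metis
  qed
qed

fun Tl :: "nat list \<Rightarrow> nat \<Rightarrow> nat" where
  "Tl [] off = 0"
| "Tl (x # xs) off = fibZ (2 * pair x (Suc off) + 1) + Tl xs (Suc off)"

lemma Tl_sum: "Tl xs off = (\<Sum>i<length xs. fibZ (2 * pair (xs ! i) (off + Suc i) + 1))"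
  by (induction xs arbitrary: off) (simp_all add: sum.lessThan_Suc_shift del: sum.lessThan_Suc)

lemma SeqZ_Tl: "SeqZ xs = Tl xs 0"
  by (simp add: SeqZ_def Tl_sum sum.atLeast1_atMost_eq)

lemma Tl_append: "Tl (xs @ ys) off = Tl xs off + Tl ys (off + length xs)"
  by (induction xs arbitrary: off) simp_all

lemma Tl_concat: "Tl (concat (map w xs)) off
   = (\<Sum>i<length xs. Tl (w (xs ! i)) (off + (\<Sum>j<i. length (w (xs ! j)))))"
proof (induction xs arbitrary: off)
  case Nil then show ?case by simp
next
  case (Cons x xs)
  have "Tl (concat (map w (x # xs))) off = Tl (w x) off + Tl (concat (map w xs)) (off + length (w x))"
    by (simp add: Tl_append)
  also have "\<dots> = Tl (w x) off + (\<Sum>i<length xs. Tl (w (xs ! i)) (off + length (w x) + (\<Sum>j<i. length (w (xs ! j)))))"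
    using Cons by simp
  also have "\<dots> = (\<Sum>i<length (x # xs). Tl (w ((x # xs) ! i)) (off + (\<Sum>j<i. length (w ((x # xs) ! j)))))"
    by (simp add: sum.lessThan_Suc_shift add.assoc del: sum.lessThan_Suc)
  finally show ?case .
qed

lemma length_decodeZ: "length (decodeZ n) = Len n" by (simp add: decodeZ_def)

lemma nth_decodeZ: "i < Len n \<Longrightarrow> decodeZ n ! i = SymbolAt n (Suc i)"
  unfolding decodeZ_def by (simp add: nth_map_upt del: upt_Suc)

lemma Tl_decodeZ: "Tl (decodeZ n) off = (\<Sum>i<Len n. fibZ (2 * pair (SymbolAt n (Suc i)) (off + Suc i) + 1))"
  by (simp add: Tl_sum length_decodeZ nth_decodeZ)

lemma Concat_sum: "Concat n m = (\<Sum>i<Len n. fibZ (2 * pair (SymbolAt n (Suc i)) (Suc i) + 1))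
   + (\<Sum>i<Len m. fibZ (2 * pair (SymbolAt m (Suc i)) (Len n + Suc i) + 1))"
  by (simp add: Concat_def SeqZ_Tl Tl_append Tl_decodeZ length_decodeZ)

lemma SubZ_sum: "SubZ v n m = (\<Sum>i<Len n.
    if SymbolAt n (Suc i) = v
    then (\<Sum>k<Len m. fibZ (2 * pair (SymbolAt m (Suc k))
            ((\<Sum>j<i. if SymbolAt n (Suc j) = v then Len m else 1) + Suc k) + 1))
    else fibZ (2 * pair (SymbolAt n (Suc i)) (Suc (\<Sum>j<i. if SymbolAt n (Suc j) = v then Len m else 1)) + 1))"
proof -
  define w where "w = (\<lambda>s. if s = v then decodeZ m else [s])"
  have "SubZ v n m = Tl (concat (map w (decodeZ n))) 0" by (simp add: SubZ_def SeqZ_Tl w_def)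
  also have "\<dots> = (\<Sum>i<Len n. Tl (w (decodeZ n ! i)) (\<Sum>j<i. length (w (decodeZ n ! j))))"
    by (simp add: Tl_concat length_decodeZ)
  also have "\<dots> = (\<Sum>i<Len n.
    if SymbolAt n (Suc i) = v
    then (\<Sum>k<Len m. fibZ (2 * pair (SymbolAt m (Suc k))
            ((\<Sum>j<i. if SymbolAt n (Suc j) = v then Len m else 1) + Suc k) + 1))
    else fibZ (2 * pair (SymbolAt n (Suc i)) (Suc (\<Sum>j<i. if SymbolAt n (Suc j) = v then Len m else 1)) + 1))"
  proof (intro sum.cong refl)
    fix i assume i: "i \<in> {..<Len n}"
    have lens: "(\<Sum>j<i. length (w (decodeZ n ! j))) = (\<Sum>j<i. if SymbolAt n (Suc j) = v then Len m else 1)"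
      using i by (intro sum.cong refl) (simp add: w_def nth_decodeZ length_decodeZ)
    show "Tl (w (decodeZ n ! i)) (\<Sum>j<i. length (w (decodeZ n ! j))) = (
    if SymbolAt n (Suc i) = v
    then (\<Sum>k<Len m. fibZ (2 * pair (SymbolAt m (Suc k))
            ((\<Sum>j<i. if SymbolAt n (Suc j) = v then Len m else 1) + Suc k) + 1))
    else fibZ (2 * pair (SymbolAt n (Suc i)) (Suc (\<Sum>j<i. if SymbolAt n (Suc j) = v then Len m else 1)) + 1))"
      unfolding lens using i by (simp add: w_def nth_decodeZ Tl_decodeZ)
  qed
  finally show ?thesis .
qed



lemma prk_zb0: "prk A \<Longrightarrow> prk (\<lambda>e. zb0 (A e))"
proof -
  assume A: "prk A"
  have "prk (\<lambda>e. \<Sum>b<2 ^ Suc (e 0). if (\<not> odd (b div 2 ^ 0) \<and> (\<forall>k<b. odd (b div 2 ^ k) \<longrightarrow> \<not> odd (b div 2 ^ Suc k))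
      \<and> (\<Sum>k<b. if odd (b div 2 ^ k) then fibZ k else 0) = e 0) then b else 0)"
    by (intro prk_intros prk_fibZ)
  then have "prk (\<lambda>e. zb0 (e 0))"
    by (rule prk_eqI) (simp only: zb0_sum Qz_def)
  from prk_comp1[OF this A] show ?thesis .
qed

lemma IsCode_alt: "IsCode n \<longleftrightarrow> (\<forall>e<Suc n. odd (zb0 n div 2 ^ e) \<longrightarrow> odd e)
   \<and> (\<forall>e<Suc n. \<forall>e'<Suc n. odd (zb0 n div 2 ^ e) \<and> odd (zb0 n div 2 ^ e') \<and> e < e' \<longrightarrow> e + 2 \<le> e')"
  unfolding IsCode_def zb0_bits using Z_le by (auto simp: less_Suc_eq_le)

lemma prk_IsCode: "prk A \<Longrightarrow> prkP (\<lambda>e. IsCode (A e))"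
proof -
  assume A: "prk A"
  have "prk (\<lambda>e. if (\<forall>k<Suc (e 0). odd (zb0 (e 0) div 2 ^ k) \<longrightarrow> odd k)
   \<and> (\<forall>k<Suc (e 0). \<forall>k'<Suc (e 0). odd (zb0 (e 0) div 2 ^ k) \<and> odd (zb0 (e 0) div 2 ^ k') \<and> k < k' \<longrightarrow> k + 2 \<le> k')
    then 1 else 0)"
    by (intro prk_intros prk_zb0)
  then have "prk (\<lambda>e. if IsCode (e 0) then 1 else 0)"
    by (rule prk_eqI) (simp only: IsCode_alt)
  from prk_comp1[OF this A] show ?thesis unfolding prkP_def .
qed

lemma Len_alt: "Len n = (if IsCode n then \<Sum>e<Suc n. if odd (zb0 n div 2 ^ e) then 1 else 0 else 0)"
  by (simp add: Len_def card_Z)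

lemma prk_Len: "prk A \<Longrightarrow> prk (\<lambda>e. Len (A e))"
proof -
  assume A: "prk A"
  have "prk (\<lambda>e. if IsCode (e 0) then \<Sum>k<Suc (e 0). if odd (zb0 (e 0) div 2 ^ k) then 1 else 0 else 0)"
    by (intro prk_intros prk_zb0 prk_IsCode)
  then have "prk (\<lambda>e. Len (e 0))"
    by (rule prk_eqI) (simp only: Len_alt)
  from prk_comp1[OF this A] show ?thesis .
qed

definition Epos :: "nat \<Rightarrow> nat \<Rightarrow> nat" where
  "Epos n i = (\<Sum>e<Suc n. if odd (zb0 n div 2 ^ e)
      \<and> (\<Sum>e'<Suc n. if odd (zb0 n div 2 ^ e') \<and> e < e' then 1 else 0) = i - 1 then e else 0)"

lemma SymbolAt_alt: "SymbolAt n i =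
   (if IsCode n \<and> 1 \<le> i \<and> i \<le> Len n \<and> snd (unpair ((Epos n i - 1) div 2)) = i
    then fst (unpair ((Epos n i - 1) div 2)) else 0)"
proof (cases "IsCode n \<and> 1 \<le> i \<and> i \<le> Len n")
  case True
  then have "i - 1 < card (Z n)" by (auto simp: Len_def)
  then have "zlist n ! (i - 1) = Epos n i"
    unfolding Epos_def by (simp add: zlist_sum cnt_Z)
  then show ?thesis by (simp add: SymbolAt_def)
next
  case False
  then show ?thesis by (auto simp: SymbolAt_def)
qed

lemma prk_SymbolAt: "prk A \<Longrightarrow> prk B \<Longrightarrow> prk (\<lambda>e. SymbolAt (A e) (B e))"
proof -
  assume A: "prk A" and B: "prk B"
  have E: "prk (\<lambda>e. Epos (e 0) (e 1))"
  proof -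
    have "prk (\<lambda>e. \<Sum>k<Suc (e 0). if odd (zb0 (e 0) div 2 ^ k)
      \<and> (\<Sum>k'<Suc (e 0). if odd (zb0 (e 0) div 2 ^ k') \<and> k < k' then 1 else 0) = e 1 - 1 then k else 0)"
      by (intro prk_intros prk_zb0)
    then show ?thesis by (rule prk_eqI) (simp only: Epos_def)
  qed
  have "prk (\<lambda>e. if IsCode (e 0) \<and> 1 \<le> e 1 \<and> e 1 \<le> Len (e 0) \<and> snd (unpair ((Epos (e 0) (e 1) - 1) div 2)) = e 1
    then fst (unpair ((Epos (e 0) (e 1) - 1) div 2)) else 0)"
    by (intro prk_intros prk_IsCode prk_Len prk_fst_unpair prk_snd_unpair E)
  then have "prk (\<lambda>e. SymbolAt (e 0) (e 1))"
    by (rule prk_eqI) (simp only: SymbolAt_alt)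
  from prk_comp2[OF this A B] show ?thesis .
qed

lemma prk_Concat: "prk (\<lambda>e. Concat (e 0) (e 1))"
proof -
  have "prk (\<lambda>e. (\<Sum>i<Len (e 0). fibZ (2 * pair (SymbolAt (e 0) (Suc i)) (Suc i) + 1))
   + (\<Sum>i<Len (e 1). fibZ (2 * pair (SymbolAt (e 1) (Suc i)) (Len (e 0) + Suc i) + 1)))"
    by (intro prk_intros prk_Len prk_SymbolAt prk_fibZ prk_pair)
  then show ?thesis by (rule prk_eqI) (simp only: Concat_sum)
qed

lemma prk_SubZ: "prk (\<lambda>e. SubZ v (e 0) (e 1))"
proof -
  have "prk (\<lambda>e. \<Sum>i<Len (e 0).
    if SymbolAt (e 0) (Suc i) = v
    then (\<Sum>k<Len (e 1). fibZ (2 * pair (SymbolAt (e 1) (Suc k))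
            ((\<Sum>j<i. if SymbolAt (e 0) (Suc j) = v then Len (e 1) else 1) + Suc k) + 1))
    else fibZ (2 * pair (SymbolAt (e 0) (Suc i)) (Suc (\<Sum>j<i. if SymbolAt (e 0) (Suc j) = v then Len (e 1) else 1)) + 1))"
    by (intro prk_intros prk_Len prk_SymbolAt prk_fibZ prk_pair)
  then show ?thesis by (rule prk_eqI) (simp only: SubZ_sum)
qed

lemma prim_rec1_I: "prk (\<lambda>e. f (e 0)) \<Longrightarrow> prim_rec1 f"
  by (simp add: prk_def prim_rec1_def env_def)

lemma prim_rec2_I: "prk (\<lambda>e. f (e 0) (e 1)) \<Longrightarrow> prim_rec2 f"
  by (simp add: prk_def prim_rec2_def env_def)

theorem lemma5p9:
  shows "prim_rec1 (\<lambda>n. if IsCode n then 1 else 0)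
       \<and> prim_rec1 Len
       \<and> prim_rec2 SymbolAt
       \<and> prim_rec2 Concat
       \<and> (\<forall>v. prim_rec2 (SubZ v))"
proof (intro conjI allI)
  show "prim_rec1 (\<lambda>n. if IsCode n then 1 else 0)"
    by (rule prim_rec1_I) (rule prk_IsCode[OF prk_var, unfolded prkP_def])
  show "prim_rec1 Len" by (rule prim_rec1_I) (rule prk_Len[OF prk_var])
  show "prim_rec2 SymbolAt" by (rule prim_rec2_I) (rule prk_SymbolAt[OF prk_var prk_var])
  show "prim_rec2 Concat" by (rule prim_rec2_I) (rule prk_Concat)
  fix v show "prim_rec2 (SubZ v)" by (rule prim_rec2_I) (rule prk_SubZ)
qed

end
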